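(* Let $(p,f)$ be an SCF-RT rationalizable within the class of symmetric RUM-CFs, and let $x,y\in X$. If $(x,y)\in T(R^s\cup R^{srt})$, then every symmetric RUM-CF $(u,g,r)$ rationalizing $(p,f)$ satisfies $u(x)\geq u(y)$. If $(x,y)\in T_P(R^s\cup R^{srt})$, then every such model satisfies $u(x)>u(y)$.
   Context: $X$ is a finite set of options; $C=\{(x,y): x,y\in X,\ x\neq y\}$; $D\subseteq C$ is a fixed non-empty set with $(x,y)\in D\Rightarrow (y,x)\in D$. An SCF $p$ assigns to each $(x,y)\in D$ a number $p(x,y)>0$ with $p(x,y)+p(y,x)=1$. An SCF-RT is a pair $(p,f)$ where $p$ is an SCF and $f$ assigns to each $(x,y)\in D$ a strictly positive density $f(x,y)$ on $\mathbb{R}^+$ with cdf $F(x,y)$. A RUM is a pair $(u,g)$ with $u:X\to\mathbb{R}$ and $g$ assigning to each $(x,y)\in C$ a density $g(x,y)$ on $\mathbb{R}$ (cdf $G(x,y)$) with $\int v\,g(x,y)(v)\,dv=u(x)-u(y)=:v(x,y)$, $g(x,y)(v)=g(y,x)(-v)$ for all $v$, and connected support. A RUM-CF is $(u,g,r)$ with $(u,g)$ a RUM and $r:\mathbb{R}^{++}\to\mathbb{R}^+$ continuous, strictly decreasing where $r(v)>0$, $\lim_{v\to0}r(v)=\infty$, $\lim_{v\to\infty}r(v)=0$; $r^{-1}(t)$ ($t>0$) is the inverse of $r$ restricted to $\{r>0\}$. It rationalizes $(p,f)$ if for all $(x,y)\in D$: $G(x,y)(0)=p(y,x)$ and $\frac{1-G(x,y)(r^{-1}(t))}{1-G(x,y)(0)}=F(x,y)(t)$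 for all $t>0$. It is symmetric if $g(x,y)(v(x,y)+\delta)=g(x,y)(v(x,y)-\delta)$ for all $(x,y)\in C$, $\delta\geq0$. For $(a,b)\in D$ with $p(a,b)>p(b,a)$, $t(a,b)>0$ is defined by $F(a,b)(t(a,b))=p(b,a)/p(a,b)$ (undefined otherwise). Relations on $X$: $(x,y)\in R^s$ iff $x=y$, or $(x,y)\in D$ and $p(x,y)\geq p(y,x)$; $(x,y)\in R^{srt}$ iff $(x,y)\in C\setminus D$ and there is $z\in X$ with $t(x,z)\leq t(y,z)$ or $t(z,x)\geq t(z,y)$ (the compared quantities being defined). For a binary relation $R$, $T(R)$ is its transitive closure and $T_P(R)$ the asymmetric part of $T(R)$ ($(x,y)\in T(R)$, $(y,x)\notin T(R)$). *)

theory Defs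
  imports "HOL-Analysis.Analysis"
begin

(* Options form a finite type 'a (X = UNIV). Pairs of distinct options: *)
definition Cpairs :: "('a \<times> 'a) set" where
  "Cpairs = {(x, y). x \<noteq> y}"

definition domain_ok :: "('a \<times> 'a) set \<Rightarrow> bool" where
  "domain_ok D \<longleftrightarrow> D \<noteq> {} \<and> D \<subseteq> Cpairs \<and> (\<forall>x y. (x, y) \<in> D \<longrightarrow> (y, x) \<in> D)"

definition is_SCF :: "('a \<times> 'a) set \<Rightarrow> ('a \<Rightarrow> 'a \<Rightarrow> real) \<Rightarrow> bool" where
  "is_SCF D p \<longleftrightarrow> (\<forall>(x, y) \<in> D. p x y > 0 \<and> p x y + p y x = 1)"

definition pos_density_Rplus :: "(real \<Rightarrow> real) \<Rightarrow> bool" where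
  "pos_density_Rplus h \<longleftrightarrow> h \<in> borel_measurable lborel \<and> (\<forall>t \<ge> 0. h t > 0)
     \<and> set_integrable lborel {0..} h \<and> (LBINT t:{0..}. h t) = 1"

definition cdf_Rplus :: "(real \<Rightarrow> real) \<Rightarrow> real \<Rightarrow> real" where
  "cdf_Rplus h t = (LBINT s:{0..t}. h s)"

definition is_SCF_RT :: "('a \<times> 'a) set \<Rightarrow> ('a \<Rightarrow> 'a \<Rightarrow> real) \<Rightarrow> ('a \<Rightarrow> 'a \<Rightarrow> real \<Rightarrow> real) \<Rightarrow> bool" where
  "is_SCF_RT D p f \<longleftrightarrow> is_SCF D p \<and> (\<forall>(x, y) \<in> D. pos_density_Rplus (f x y))"

definition density_R :: "(real \<Rightarrow> real) \<Rightarrow> bool" where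
  "density_R h \<longleftrightarrow> h \<in> borel_measurable lborel \<and> (\<forall>v. h v \<ge> 0)
     \<and> integrable lborel h \<and> integral\<^sup>L lborel h = 1"

definition cdf_R :: "(real \<Rightarrow> real) \<Rightarrow> real \<Rightarrow> real" where
  "cdf_R h v = (LBINT w:{..v}. h w)"

definition dens_support :: "(real \<Rightarrow> real) \<Rightarrow> real set" where
  "dens_support h = {v. h v > 0}"

definition is_RUM :: "('a \<Rightarrow> real) \<Rightarrow> ('a \<Rightarrow> 'a \<Rightarrow> real \<Rightarrow> real) \<Rightarrow> bool" where
  "is_RUM u g \<longleftrightarrow> (\<forall>(x, y) \<in> Cpairs.
      density_R (g x y)
      \<and> integrable lborel (\<lambda>v. v * g x y v)
      \<and> (LINT v|lborel. v * g x y v) = u x - u y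
      \<and> (\<forall>v. g x y v = g y x (- v))
      \<and> connected (dens_support (g x y)))"

definition is_CF :: "(real \<Rightarrow> real) \<Rightarrow> bool" where
  "is_CF r \<longleftrightarrow> continuous_on {0<..} r
     \<and> (\<forall>v > 0. r v \<ge> 0)
     \<and> (\<forall>v w. 0 < v \<and> v < w \<and> r v > 0 \<and> r w > 0 \<longrightarrow> r w < r v)
     \<and> filterlim r at_top (at_right 0)
     \<and> (r \<longlongrightarrow> 0) at_top"

definition rinv :: "(real \<Rightarrow> real) \<Rightarrow> real \<Rightarrow> real" where
  "rinv r t = (THE v. 0 < v \<and> r v > 0 \<and> r v = t)"

definition is_RUM_CF :: "('a \<Rightarrow> real) \<Rightarrow> ('a \<Rightarrow> 'a \<Rightarrow> real \<Rightarrow> real) \<Rightarrow> (real \<Rightarrow> real) \<Rightarrow> bool" where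
  "is_RUM_CF u g r \<longleftrightarrow> is_RUM u g \<and> is_CF r"

definition rationalizes ::
  "('a \<times> 'a) set \<Rightarrow> ('a \<Rightarrow> 'a \<Rightarrow> real) \<Rightarrow> ('a \<Rightarrow> 'a \<Rightarrow> real \<Rightarrow> real)
   \<Rightarrow> ('a \<Rightarrow> real) \<Rightarrow> ('a \<Rightarrow> 'a \<Rightarrow> real \<Rightarrow> real) \<Rightarrow> (real \<Rightarrow> real) \<Rightarrow> bool" where
  "rationalizes D p f u g r \<longleftrightarrow> is_RUM_CF u g r \<and>
     (\<forall>(x, y) \<in> D. cdf_R (g x y) 0 = p y x
        \<and> (\<forall>t > 0. (1 - cdf_R (g x y) (rinv r t)) / (1 - cdf_R (g x y) 0) = cdf_Rplus (f x y) t))"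

definition is_symmetric :: "('a \<Rightarrow> real) \<Rightarrow> ('a \<Rightarrow> 'a \<Rightarrow> real \<Rightarrow> real) \<Rightarrow> bool" where
  "is_symmetric u g \<longleftrightarrow> (\<forall>(x, y) \<in> Cpairs. \<forall>\<delta> \<ge> 0.
      g x y (u x - u y + \<delta>) = g x y (u x - u y - \<delta>))"

definition sym_rationalizes ::
  "('a \<times> 'a) set \<Rightarrow> ('a \<Rightarrow> 'a \<Rightarrow> real) \<Rightarrow> ('a \<Rightarrow> 'a \<Rightarrow> real \<Rightarrow> real)
   \<Rightarrow> ('a \<Rightarrow> real) \<Rightarrow> ('a \<Rightarrow> 'a \<Rightarrow> real \<Rightarrow> real) \<Rightarrow> (real \<Rightarrow> real) \<Rightarrow> bool" where
  "sym_rationalizes D p f u g r \<longleftrightarrow> rationalizes D p f u g r \<and> is_symmetric u g"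

definition tval ::
  "('a \<times> 'a) set \<Rightarrow> ('a \<Rightarrow> 'a \<Rightarrow> real) \<Rightarrow> ('a \<Rightarrow> 'a \<Rightarrow> real \<Rightarrow> real) \<Rightarrow> 'a \<Rightarrow> 'a \<Rightarrow> real option" where
  "tval D p f a b = (if (a, b) \<in> D \<and> p a b > p b a
      then Some (THE t. t > 0 \<and> cdf_Rplus (f a b) t = p b a / p a b) else None)"

definition Rs :: "('a \<times> 'a) set \<Rightarrow> ('a \<Rightarrow> 'a \<Rightarrow> real) \<Rightarrow> ('a \<times> 'a) set" where
  "Rs D p = {(x, y). x = y \<or> ((x, y) \<in> D \<and> p x y \<ge> p y x)}"

definition Rsrt ::
  "('a \<times> 'a) set \<Rightarrow> ('a \<Rightarrow> 'a \<Rightarrow> real) \<Rightarrow> ('a \<Rightarrow> 'a \<Rightarrow> real \<Rightarrow> real) \<Rightarrow> ('a \<times> 'a) set" where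
  "Rsrt D p f = {(x, y). (x, y) \<in> Cpairs - D \<and> (\<exists>z.
      (\<exists>s1 s2. tval D p f x z = Some s1 \<and> tval D p f y z = Some s2 \<and> s1 \<le> s2)
    \<or> (\<exists>s1 s2. tval D p f z x = Some s1 \<and> tval D p f z y = Some s2 \<and> s1 \<ge> s2))}"

definition TC :: "('a \<times> 'a) set \<Rightarrow> ('a \<times> 'a) set" where
  "TC R = R\<^sup>+"

definition TP :: "('a \<times> 'a) set \<Rightarrow> ('a \<times> 'a) set" where
  "TP R = {(x, y). (x, y) \<in> TC R \<and> (y, x) \<notin> TC R}"

end

theory Submission
  imports Defs
begin

lemma dens_int_ind:
  fixes h :: "real \<Rightarrow> real"
  assumes "density_R h" "A \<in> sets lborel"
  shows "integrable lborel (\<lambda>s. indicator A s * h s)"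
  using integrable_mult_indicator[OF assms(2), of h] assms(1) unfolding density_R_def by simp

lemma cdf_R_eq: "cdf_R h w = (\<integral>s. indicator {..w} s * h s \<partial>lborel)"
  unfolding cdf_R_def set_lebesgue_integral_def by simp

lemma sym_G:
  fixes h :: "real \<Rightarrow> real"
  assumes d: "density_R h" and sy: "\<And>s. h (2 * m - s) = h s"
  shows "cdf_R h w + cdf_R h (2 * m - w) = 1"
proof -
  have hm[measurable]: "h \<in> borel_measurable borel" using d unfolding density_R_def by simp
  have "cdf_R h (2 * m - w) = (\<integral>s. indicator {..2 * m-w} (2 * m + (-1) * s) * h (2 * m + (-1) * s) \<partial>lborel)"
    unfolding cdf_R_eq
    using lborel_integral_real_affine[of "-1" "\<lambda>s. indicator {..2 * m-w} s * h s" "2 * m"] by simp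
  also have "\<dots> = (\<integral>s. indicator {w..} s * h s \<partial>lborel)"
    using sy by (intro Bochner_Integration.integral_cong) (auto split: split_indicator)
  also have "\<dots> = (\<integral>s. indicator {w<..} s * h s \<partial>lborel)"
    apply (rule integral_cong_AE)
    apply measurable
    apply (auto intro: AE_mp[OF AE_lborel_singleton[of w]] split: split_indicator)
    done
  finally have 1: "cdf_R h (2 * m - w) = (\<integral>s. indicator {w<..} s * h s \<partial>lborel)" .
  have "cdf_R h w + cdf_R h (2 * m - w) = (\<integral>s. indicator {..w} s * h s + indicator {w<..} s * h s \<partial>lborel)"
    unfolding 1 unfolding cdf_R_eq
    by (intro Bochner_Integration.integral_add[symmetric] dens_int_ind[OF d]) auto
  also have "\<dots> = (\<integral>s. h s \<partial>lborel)"
    by (intro Bochner_Integration.integral_cong) (auto split: split_indicator)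
  also have "\<dots> = 1" using d unfolding density_R_def by simp
  finally show ?thesis .
qed

lemma G_diff:
  fixes h :: "real \<Rightarrow> real"
  assumes d: "density_R h" and "a \<le> b"
  shows "cdf_R h b - cdf_R h a = (\<integral>s. indicator {a<..b} s * h s \<partial>lborel)"
proof -
  have "cdf_R h b - cdf_R h a = (\<integral>s. indicator {..b} s * h s - indicator {..a} s * h s \<partial>lborel)"
    unfolding cdf_R_eq
    by (intro Bochner_Integration.integral_diff[symmetric] dens_int_ind[OF d]) auto
  also have "\<dots> = (\<integral>s. indicator {a<..b} s * h s \<partial>lborel)"
    using assms(2) by (intro Bochner_Integration.integral_cong) (auto split: split_indicator)
  finally show ?thesis .
qed

lemma G_mono:
  fixes h :: "real \<Rightarrow> real"
  assumes d: "density_R h" and "a \<le> b"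
  shows "cdf_R h a \<le> cdf_R h b"
proof -
  have "0 \<le> (\<integral>s. indicator {a<..b} s * h s \<partial>lborel)"
    using d unfolding density_R_def by (intro Bochner_Integration.integral_nonneg) (auto split: split_indicator)
  then show ?thesis using G_diff[OF assms] by simp
qed

lemma G_flat:
  fixes h :: "real \<Rightarrow> real"
  assumes d: "density_R h" and "a \<le> b" and "cdf_R h a = cdf_R h b"
  shows "AE s in lborel. s \<in> {a<..b} \<longrightarrow> h s = 0"
proof -
  have "(\<integral>s. indicator {a<..b} s * h s \<partial>lborel) = 0" using G_diff[OF d assms(2)] assms(3) by simp
  then have "AE s in lborel. indicator {a<..b} s * h s = 0"
    using d unfolding density_R_def
    by (subst integral_nonneg_eq_0_iff_AE[symmetric]) (auto intro: dens_int_ind[OF d])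
  then show ?thesis by (auto elim!: AE_mp split: split_indicator)
qed

lemma F_int:
  fixes h :: "real \<Rightarrow> real"
  assumes d: "pos_density_Rplus h" and "A \<subseteq> {0..}" "A \<in> sets lborel"
  shows "integrable lborel (\<lambda>s. indicator A s * h s)"
proof -
  have "set_integrable lborel A h"
    using set_integrable_subset[of lborel "{0..}" h A] d assms(2,3) unfolding pos_density_Rplus_def by auto
  then show ?thesis unfolding set_integrable_def by simp
qed

lemma cdf_Rplus_eq: "cdf_Rplus h w = (\<integral>s. indicator {0..w} s * h s \<partial>lborel)"
  unfolding cdf_Rplus_def set_lebesgue_integral_def by simp

lemma F_diff:
  fixes h :: "real \<Rightarrow> real"
  assumes d: "pos_density_Rplus h" and "0 \<le> a" "a \<le> b"
  shows "cdf_Rplus h b - cdf_Rplus h a = (\<integral>s. indicator {a<..b} s * h s \<partial>lborel)"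
proof -
  have "cdf_Rplus h b - cdf_Rplus h a = (\<integral>s. indicator {0..b} s * h s - indicator {0..a} s * h s \<partial>lborel)"
    unfolding cdf_Rplus_eq
    by (intro Bochner_Integration.integral_diff[symmetric] F_int[OF d]) auto
  also have "\<dots> = (\<integral>s. indicator {a<..b} s * h s \<partial>lborel)"
    using assms(2,3) by (intro Bochner_Integration.integral_cong) (auto split: split_indicator)
  finally show ?thesis .
qed

lemma F_strict:
  fixes h :: "real \<Rightarrow> real"
  assumes d: "pos_density_Rplus h" and "0 \<le> a" "a < b"
  shows "cdf_Rplus h a < cdf_Rplus h b"
proof (rule ccontr)
  have hp: "\<And>x. a < x \<Longrightarrow> 0 < h x" using d assms(2) unfolding pos_density_Rplus_def by auto
  assume "\<not> ?thesis"
  moreover have "0 \<le> (\<integral>s. indicator {a<..b} s * h s \<partial>lborel)"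
    using hp by (intro Bochner_Integration.integral_nonneg) (auto simp: less_imp_le split: split_indicator)
  ultimately have "(\<integral>s. indicator {a<..b} s * h s \<partial>lborel) = 0"
    using F_diff[OF d assms(2) less_imp_le[OF assms(3)]] by linarith
  then have "AE s in lborel. indicator {a<..b} s * h s = 0"
    using hp assms
    by (subst integral_nonneg_eq_0_iff_AE[symmetric]) (auto intro!: F_int[OF d] simp: less_imp_le split: split_indicator)
  then have "AE s in lborel. s \<notin> {a<..<b}"
    apply (rule AE_mp)
    apply (rule AE_I2)
    using hp by (force split: split_indicator)
  then have "emeasure lborel {a<..<b} = 0"
    by (subst AE_iff_measurable[symmetric, where P="\<lambda>s. s \<notin> {a<..<b}"]) auto
  then show False using assms by simp
qed

lemma F_small:
  fixes h :: "real \<Rightarrow> real"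
  assumes d: "pos_density_Rplus h" and "c > 0"
  shows "\<exists>t>0. cdf_Rplus h t < c"
proof -
  have eq: "cdf_Rplus h t = integral {0..t} h" if "t \<ge> 0" for t
  proof -
    have "set_integrable lborel {0..t} h"
      using set_integrable_subset[of lborel "{0..}" h "{0..t}"] d unfolding pos_density_Rplus_def by auto
    then show ?thesis unfolding cdf_Rplus_def by (rule set_borel_integral_eq_integral)
  qed
  have "set_integrable lborel {0..1} h"
    using set_integrable_subset[of lborel "{0..}" h "{0..1}"] d unfolding pos_density_Rplus_def by auto
  then have "h integrable_on {0..1}" by (rule set_borel_integral_eq_integral)
  then have "continuous_on {0..1} (\<lambda>x. integral {0..x} h)" by (rule indefinite_integral_continuous_1)
  then obtain e where e: "e > 0" "\<And>x. x \<in> {0..1} \<Longrightarrow> dist x 0 < e \<Longrightarrow> dist (integral {0..x} h) (integral {0..0} h) < c"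
    unfolding continuous_on_iff using assms(2) by (metis atLeastAtMost_iff order_refl zero_le_one)
  define t where "t = min (e/2) 1"
  have t: "t > 0" "t \<in> {0..1}" "dist t 0 < e" using e unfolding t_def by auto
  have "dist (integral {0..t} h) 0 < c" using e(2)[OF t(2,3)] by simp
  then show ?thesis using t eq[of t] by (intro exI[of _ t]) auto
qed

lemma CF_near0:
  assumes "is_CF r" "b > 0"
  shows "\<exists>a. 0 < a \<and> a < b \<and> r a > y"
proof -
  have "filterlim r at_top (at_right 0)" using assms(1) unfolding is_CF_def by simp
  then have "eventually (\<lambda>x. y + 1 \<le> r x) (at_right (0::real))" unfolding filterlim_at_top by simp
  then obtain b' where b': "b' > 0" "\<And>z. 0 < z \<Longrightarrow> z < b' \<Longrightarrow> y + 1 \<le> r z"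
    unfolding eventually_at_right_field by auto
  define a where "a = min b b' / 2"
  have "0 < a" "a < b" "a < b'" using b'(1) assms(2) unfolding a_def by auto
  then show ?thesis using b'(2)[of a] by (intro exI[of _ a]) auto
qed

lemma CF_far:
  assumes "is_CF r" "y > 0"
  shows "\<exists>b>a. r b < y"
proof -
  have "(r \<longlongrightarrow> 0) at_top" using assms(1) unfolding is_CF_def by simp
  then have "eventually (\<lambda>x. r x < y) at_top" using assms(2) by (rule order_tendstoD)
  then obtain N where "\<And>n. n \<ge> N \<Longrightarrow> r n < y" unfolding eventually_at_top_linorder by auto
  then show ?thesis by (intro exI[of _ "max N (a+1)"]) auto
qed

lemma CF_cont: "is_CF r \<Longrightarrow> 0 < a \<Longrightarrow> continuous_on {a..b} r"
  unfolding is_CF_def by (auto elim: continuous_on_subset)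

lemma CF_onto:
  assumes "is_CF r" "t > 0"
  shows "\<exists>w>0. r w = t"
proof -
  obtain a where a: "0 < a" "r a > t" using CF_near0[OF assms(1), of 1 t] by auto
  obtain b where b: "b > a" "r b < t" using CF_far[OF assms] by auto
  obtain x where "a \<le> x" "x \<le> b" "r x = t"
    using IVT2'[of r b t a] a b CF_cont[OF assms(1) a(1), of b] by auto
  then show ?thesis using a by (intro exI[of _ x]) auto
qed

lemma CF_inj:
  assumes "is_CF r" "0 < w1" "0 < w2" "r w1 > 0" "r w1 = r w2"
  shows "w1 = w2"
  using assms unfolding is_CF_def by (metis linorder_neqE_linordered_idom less_irrefl)

lemma rinv_prop:
  assumes "is_CF r" "t > 0"
  shows "0 < rinv r t \<and> r (rinv r t) = t"
proof -
  obtain w where w: "w > 0" "r w = t" using CF_onto[OF assms] by auto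
  have "0 < rinv r t \<and> r (rinv r t) > 0 \<and> r (rinv r t) = t"
    unfolding rinv_def
    apply (rule theI[of _ w])
    using w assms CF_inj[OF assms(1)] by auto
  then show ?thesis by simp
qed

lemma rinv_eq:
  assumes "is_CF r" "w > 0" "r w > 0"
  shows "rinv r (r w) = w"
  unfolding rinv_def
  apply (rule the_equality)
  using assms CF_inj[OF assms(1)] by auto

lemma CF_pos_left:
  assumes "is_CF r" "0 < a" "a \<le> w" "r w > 0"
  shows "r a > 0"
proof (rule ccontr)
  assume na: "\<not> r a > 0"
  have r0: "r a = 0" using na assms unfolding is_CF_def by force
  then have aw: "a < w" using assms by (cases "a = w") auto
  define y where "y = r w / 2"
  have y: "0 < y" "y < r w" using assms(4) unfolding y_def by auto
  obtain c where c: "a \<le> c" "c \<le> w" "r c = y"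
    using IVT'[of r a y w] r0 y aw CF_cont[OF assms(1,2), of w] by auto
  obtain a0 where a0: "0 < a0" "a0 < a" "r a0 > y" using CF_near0[OF assms(1,2)] by auto
  obtain d where d: "a0 \<le> d" "d \<le> a" "r d = y"
    using IVT2'[of r a y a0] r0 y a0 CF_cont[OF assms(1) a0(1), of a] by auto
  have "d \<noteq> c" using c d r0 y by auto
  then have "d < c" using c d by auto
  moreover have "0 < d" "0 < r d" "0 < r c" using c d y a0 by auto
  ultimately have "r c < r d" using assms(1) unfolding is_CF_def by blast
  then show False using c d by simp
qed

lemma supp_contra:
  fixes h :: "real \<Rightarrow> real"
  assumes d: "density_R h" and sy: "\<And>s. h (2 * m - s) = h s"
    and con: "connected (dens_support h)" and m: "m < 0"
    and ae: "AE s in lborel. s \<in> {2 * m<..0} \<longrightarrow> h s = 0"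
  shows False
proof -
  have hm[measurable]: "h \<in> borel_measurable borel" and hn: "\<And>s. 0 \<le> h s"
    and h1: "integral\<^sup>L lborel h = 1" using d unfolding density_R_def by auto
  define S where "S = dens_support h"
  have iv: "\<And>a b x. a \<in> S \<Longrightarrow> b \<in> S \<Longrightarrow> a \<le> x \<Longrightarrow> x \<le> b \<Longrightarrow> x \<in> S"
    using con unfolding S_def is_interval_connected_1[symmetric] is_interval_1 by blast
  have c1: "\<not> {2 * m<..<0} \<subseteq> S"
  proof
    assume sub: "{2 * m<..<0} \<subseteq> S"
    have "AE s in lborel. s \<notin> {2 * m<..<0}"
      using ae apply (rule AE_mp)
      apply (rule AE_I2)
      using sub unfolding S_def dens_support_def by force
    then have "emeasure lborel {2 * m<..<0} = 0"
      by (subst AE_iff_measurable[symmetric, where P="\<lambda>s. s \<notin> {2 * m<..<0}"]) auto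
    then show False using m by simp
  qed
  have c2: "2 * m < s \<and> s < 0" if "s \<in> S" for s
  proof (rule ccontr)
    assume "\<not> (2 * m < s \<and> s < 0)"
    moreover have "2 * m - s \<in> S" using that sy[of s] unfolding S_def dens_support_def by simp
    ultimately have "{2 * m<..<0} \<subseteq> S"
      using iv that by (smt (verit) greaterThanLessThan_iff subsetI)
    then show False using c1 by simp
  qed
  have "AE s in lborel. h s = 0"
    using ae apply (rule AE_mp)
    apply (rule AE_I2)
    using c2 hn unfolding S_def dens_support_def
    by (metis greaterThanAtMost_iff less_eq_real_def mem_Collect_eq)
  then have "integral\<^sup>L lborel h = 0"
    by (rule integral_eq_zero_AE)
  then show False using h1 by simp
qed

lemma pair_facts:
  assumes dom: "domain_ok D" and rt: "is_SCF_RT D p f" and sr: "sym_rationalizes D p f u g r"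
    and ab: "(a, b) \<in> D"
  shows "density_R (g a b)" "\<And>s. g a b (2 * (u a - u b) - s) = g a b s"
    "connected (dens_support (g a b))" "cdf_R (g a b) 0 = p b a"
    "\<And>t. t > 0 \<Longrightarrow> (1 - cdf_R (g a b) (rinv r t)) / (1 - cdf_R (g a b) 0) = cdf_Rplus (f a b) t"
    "p a b > 0" "p b a > 0" "p a b + p b a = 1" "pos_density_Rplus (f a b)" "is_CF r"
    "(b, a) \<in> D"
proof -
  have ba: "(b, a) \<in> D" using dom ab unfolding domain_ok_def by blast
  then show "(b, a) \<in> D" .
  have C: "(a, b) \<in> Cpairs" using dom ab unfolding domain_ok_def by blast
  have R: "is_RUM u g" "is_CF r" using sr unfolding sym_rationalizes_def rationalizes_def is_RUM_CF_def by auto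
  then show "is_CF r" by simp
  show "density_R (g a b)" "connected (dens_support (g a b))" using R(1) C unfolding is_RUM_def by auto
  have sym: "\<And>\<delta>. \<delta> \<ge> 0 \<Longrightarrow> g a b (u a - u b + \<delta>) = g a b (u a - u b - \<delta>)"
    using sr C unfolding sym_rationalizes_def is_symmetric_def by auto
  show "g a b (2 * (u a - u b) - s) = g a b s" for s
  proof (cases "s \<ge> u a - u b")
    case True
    then show ?thesis using sym[of "s - (u a - u b)"] by (simp add: algebra_simps)
  next
    case False
    then show ?thesis using sym[of "(u a - u b) - s"] by (simp add: algebra_simps)
  qed
  have rat: "\<forall>(x, y)\<in>D. cdf_R (g x y) 0 = p y x
        \<and> (\<forall>t > 0. (1 - cdf_R (g x y) (rinv r t)) / (1 - cdf_R (g x y) 0) = cdf_Rplus (f x y) t)"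
    using sr unfolding sym_rationalizes_def rationalizes_def by blast
  then show "cdf_R (g a b) 0 = p b a" using ab by auto
  show "(1 - cdf_R (g a b) (rinv r t)) / (1 - cdf_R (g a b) 0) = cdf_Rplus (f a b) t" if "t > 0" for t
    using rat ab that by auto
  show "p a b > 0" "p b a > 0" "p a b + p b a = 1" "pos_density_Rplus (f a b)"
    using rt ab ba unfolding is_SCF_RT_def is_SCF_def by auto
qed

lemma K2:
  assumes dom: "domain_ok D" and rt: "is_SCF_RT D p f" and sr: "sym_rationalizes D p f u g r"
    and ab: "(a, b) \<in> D" and eq: "u a = u b"
  shows "p a b = p b a"
proof -
  note P = pair_facts[OF dom rt sr ab]
  have "cdf_R (g a b) 0 + cdf_R (g a b) (2 * (u a - u b) - 0) = 1" by (rule sym_G[OF P(1) P(2)])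
  then show ?thesis using P(4) P(8) eq by simp
qed

lemma K1:
  assumes dom: "domain_ok D" and rt: "is_SCF_RT D p f" and sr: "sym_rationalizes D p f u g r"
    and ab: "(a, b) \<in> D" and ge: "p a b \<ge> p b a"
  shows "u a \<ge> u b"
proof (rule ccontr)
  assume "\<not> u a \<ge> u b"
  then have m: "u a - u b < 0" by simp
  note P = pair_facts[OF dom rt sr ab]
  define m where "m = u a - u b"
  have s: "cdf_R (g a b) 0 + cdf_R (g a b) (2 * m - 0) = 1" unfolding m_def by (rule sym_G[OF P(1) P(2)])
  have mono: "cdf_R (g a b) (2 * m) \<le> cdf_R (g a b) 0" using G_mono[OF P(1)] m unfolding m_def by simp
  have "cdf_R (g a b) (2 * m) = cdf_R (g a b) 0" using s mono P(4) P(8) ge by simp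
  then have "AE s in lborel. s \<in> {2 * m<..0} \<longrightarrow> g a b s = 0"
    using G_flat[OF P(1)] m unfolding m_def by simp
  then show False using supp_contra[OF P(1) P(2)[folded m_def] P(3)] m unfolding m_def by simp
qed

lemma K3:
  assumes dom: "domain_ok D" and rt: "is_SCF_RT D p f" and sr: "sym_rationalizes D p f u g r"
    and ab: "(a, b) \<in> D" and gt: "p a b > p b a"
  shows "u a > u b \<and> r (2 * (u a - u b)) > 0 \<and> tval D p f a b = Some (r (2 * (u a - u b)))"
proof -
  note P = pair_facts[OF dom rt sr ab]
  define m where "m = u a - u b"
  define G where "G = cdf_R (g a b)"
  define F where "F = cdf_Rplus (f a b)"
  have G0: "G 0 = p b a" and pab: "p a b = 1 - G 0" using P(4) P(8) unfolding G_def by auto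
  have s: "G 0 + G (2 * m) = 1" using sym_G[OF P(1) P(2), of 0] unfolding m_def G_def by simp
  have m0: "m > 0"
  proof (rule ccontr)
    assume "\<not> m > 0"
    then have "G (2 * m) \<le> G 0" using G_mono[OF P(1)] unfolding G_def by simp
    then show False using s gt G0 pab by simp
  qed
  define c where "c = p b a / p a b"
  have c0: "c > 0" using P(6,7) unfolding c_def by simp
  obtain t1 where t1: "t1 > 0" "F t1 < c" using F_small[OF P(9) c0] unfolding F_def by auto
  define w1 where "w1 = rinv r t1"
  have w1: "w1 > 0" "r w1 = t1" using rinv_prop[OF P(10) t1(1)] unfolding w1_def by auto
  have "(1 - G w1) / (1 - G 0) = F t1" using P(5)[OF t1(1)] unfolding G_def F_def w1_def by simp
  then have "(1 - G w1) / (1 - G 0) < G 0 / (1 - G 0)" using t1 G0 pab unfolding c_def by simp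
  then have "1 - G w1 < G 0" using P(6) pab by (simp add: divide_strict_right_mono_neg divide_less_cancel)
  then have "G (2 * m) < G w1" using s by simp
  then have "2 * m < w1" using G_mono[OF P(1), of w1 "2 * m"] unfolding G_def by force
  then have rpos: "r (2 * m) > 0" using CF_pos_left[OF P(10), of "2 * m" w1] m0 w1 t1(1) by simp
  define t0 where "t0 = r (2 * m)"
  have ri: "rinv r t0 = 2 * m" unfolding t0_def using rinv_eq[OF P(10)] m0 rpos by simp
  have t0p: "t0 > 0" using rpos unfolding t0_def .
  have "(1 - G (2 * m)) / (1 - G 0) = F t0"
    using P(5)[OF t0p] unfolding G_def[symmetric] F_def[symmetric] ri .
  moreover have "1 - G (2 * m) = p b a" using s G0 by linarith
  ultimately have Ft0: "F t0 = c"
    using G0 pab unfolding c_def by simp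
  have the: "(THE t. t > 0 \<and> cdf_Rplus (f a b) t = p b a / p a b) = t0"
  proof (rule the_equality)
    show "t0 > 0 \<and> cdf_Rplus (f a b) t0 = p b a / p a b" using rpos Ft0 unfolding t0_def F_def c_def by simp
    fix t assume t: "t > 0 \<and> cdf_Rplus (f a b) t = p b a / p a b"
    show "t = t0"
    proof (rule ccontr)
      assume "t \<noteq> t0"
      then consider "t < t0" | "t0 < t" by linarith
      then show False
        using F_strict[OF P(9), of t t0] F_strict[OF P(9), of t0 t] t Ft0 rpos
        unfolding F_def c_def t0_def by (cases, auto)
    qed
  qed
  show ?thesis using m0 rpos the gt ab unfolding tval_def m_def t0_def by simp
qed

lemma tval_Some: "tval D p f a b = Some s \<Longrightarrow> (a, b) \<in> D \<and> p a b > p b a"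
  unfolding tval_def by (auto split: if_splits)

lemma CF_strict: "is_CF r \<Longrightarrow> 0 < v \<Longrightarrow> v < w \<Longrightarrow> r v > 0 \<Longrightarrow> r w > 0 \<Longrightarrow> r w < r v"
  unfolding is_CF_def by blast

lemma step:
  assumes dom: "domain_ok D" and rt: "is_SCF_RT D p f" and sr: "sym_rationalizes D p f u g r"
    and xy: "(x, y) \<in> Rs D p \<union> Rsrt D p f"
  shows "u x \<ge> u y \<and> (u x = u y \<longrightarrow> (y, x) \<in> Rs D p \<union> Rsrt D p f)"
proof -
  have CF: "is_CF r" using sr unfolding sym_rationalizes_def rationalizes_def is_RUM_CF_def by auto
  have Dsym: "\<And>a b. (a, b) \<in> D \<Longrightarrow> (b, a) \<in> D" using dom unfolding domain_ok_def by blast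
  have K3': "u a > u b \<and> r (2 * (u a - u b)) > 0 \<and> s = r (2 * (u a - u b))"
    if "tval D p f a b = Some s" for a b s
    using K3[OF dom rt sr tval_Some[OF that, THEN conjunct1] tval_Some[OF that, THEN conjunct2]] that by simp
  show ?thesis
  proof (cases "(x, y) \<in> Rs D p")
    case True
    show ?thesis
    proof (cases "x = y")
      case True then show ?thesis by (simp add: Rs_def)
    next
      case False
      then have d: "(x, y) \<in> D" "p x y \<ge> p y x" using \<open>(x, y) \<in> Rs D p\<close> unfolding Rs_def by auto
      have "u x \<ge> u y" by (rule K1[OF dom rt sr d])
      moreover have "u x = u y \<longrightarrow> (y, x) \<in> Rs D p"
        using K2[OF dom rt sr d(1)] Dsym[OF d(1)] unfolding Rs_def by auto
      ultimately show ?thesis by blast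
    qed
  next
    case False
    then have R: "(x, y) \<in> Cpairs - D" and
      z: "\<exists>z. (\<exists>s1 s2. tval D p f x z = Some s1 \<and> tval D p f y z = Some s2 \<and> s1 \<le> s2)
    \<or> (\<exists>s1 s2. tval D p f z x = Some s1 \<and> tval D p f z y = Some s2 \<and> s1 \<ge> s2)"
      using xy unfolding Rsrt_def by auto
    have R': "(y, x) \<in> Cpairs - D" using R Dsym unfolding Cpairs_def by auto
    from z obtain z where
      "(\<exists>s1 s2. tval D p f x z = Some s1 \<and> tval D p f y z = Some s2 \<and> s1 \<le> s2)
    \<or> (\<exists>s1 s2. tval D p f z x = Some s1 \<and> tval D p f z y = Some s2 \<and> s1 \<ge> s2)" by blast
    then show ?thesis
    proof
      assume "\<exists>s1 s2. tval D p f x z = Some s1 \<and> tval D p f y z = Some s2 \<and> s1 \<le> s2"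
      then obtain s1 s2 where s: "tval D p f x z = Some s1" "tval D p f y z = Some s2" "s1 \<le> s2" by blast
      have A: "u x > u z" "r (2 * (u x - u z)) > 0" "s1 = r (2 * (u x - u z))"
        using K3'[OF s(1)] by auto
      have B: "u y > u z" "r (2 * (u y - u z)) > 0" "s2 = r (2 * (u y - u z))"
        using K3'[OF s(2)] by auto
      have ge: "u x \<ge> u y"
      proof (rule ccontr)
        assume "\<not> ?thesis"
        then have "r (2 * (u y - u z)) < r (2 * (u x - u z))"
          using CF_strict[OF CF, of "2 * (u x - u z)" "2 * (u y - u z)"] A B by simp
        then show False using A B s(3) by simp
      qed
      moreover have "u x = u y \<longrightarrow> (y, x) \<in> Rsrt D p f"
      proof
        assume "u x = u y"
        then have "s1 = s2" using A B by simp
        then show "(y, x) \<in> Rsrt D p f" using s R' unfolding Rsrt_def by blast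
      qed
      ultimately show ?thesis by blast
    next
      assume "\<exists>s1 s2. tval D p f z x = Some s1 \<and> tval D p f z y = Some s2 \<and> s1 \<ge> s2"
      then obtain s1 s2 where s: "tval D p f z x = Some s1" "tval D p f z y = Some s2" "s1 \<ge> s2" by blast
      have A: "u z > u x" "r (2 * (u z - u x)) > 0" "s1 = r (2 * (u z - u x))"
        using K3'[OF s(1)] by auto
      have B: "u z > u y" "r (2 * (u z - u y)) > 0" "s2 = r (2 * (u z - u y))"
        using K3'[OF s(2)] by auto
      have ge: "u x \<ge> u y"
      proof (rule ccontr)
        assume "\<not> ?thesis"
        then have "r (2 * (u z - u x)) < r (2 * (u z - u y))"
          using CF_strict[OF CF, of "2 * (u z - u y)" "2 * (u z - u x)"] A B by simp
        then show False using A B s(3) by simp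
      qed
      moreover have "u x = u y \<longrightarrow> (y, x) \<in> Rsrt D p f"
      proof
        assume "u x = u y"
        then have "s1 = s2" using A B by simp
        then show "(y, x) \<in> Rsrt D p f" using s R' unfolding Rsrt_def by blast
      qed
      ultimately show ?thesis by blast
    qed
  qed
qed

lemma chain:
  assumes dom: "domain_ok D" and rt: "is_SCF_RT D p f" and sr: "sym_rationalizes D p f u g r"
    and xy: "(x, y) \<in> (Rs D p \<union> Rsrt D p f)\<^sup>+"
  shows "u x \<ge> u y \<and> (u x = u y \<longrightarrow> (y, x) \<in> (Rs D p \<union> Rsrt D p f)\<^sup>+)"
  using xy
proof (induction rule: trancl_induct)
  case (base y)
  then show ?case using step[OF dom rt sr base] by auto
next
  case (step y z)
  note S = Submission.step[OF dom rt sr step(2)]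
  have "u x \<ge> u z" using step(3) S by linarith
  moreover have "u x = u z \<longrightarrow> (z, x) \<in> (Rs D p \<union> Rsrt D p f)\<^sup>+"
  proof
    assume e: "u x = u z"
    then have "u x = u y" "u y = u z" using step(3) S by linarith+
    then have "(y, x) \<in> (Rs D p \<union> Rsrt D p f)\<^sup>+" "(z, y) \<in> Rs D p \<union> Rsrt D p f"
      using step(3) S by auto
    then show "(z, x) \<in> (Rs D p \<union> Rsrt D p f)\<^sup>+" by (meson trancl_into_trancl2)
  qed
  ultimately show ?case by blast
qed

theorem corollary4:
  fixes D :: "('a::finite \<times> 'a) set"
    and p :: "'a \<Rightarrow> 'a \<Rightarrow> real"
    and f :: "'a \<Rightarrow> 'a \<Rightarrow> real \<Rightarrow> real"
    and x y :: 'a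
  assumes "domain_ok D"
    and "is_SCF_RT D p f"
    and "\<exists>u g r. sym_rationalizes D p f u g r"
  shows "((x, y) \<in> TC (Rs D p \<union> Rsrt D p f) \<longrightarrow>
            (\<forall>u g r. sym_rationalizes D p f u g r \<longrightarrow> u x \<ge> u y))
       \<and> ((x, y) \<in> TP (Rs D p \<union> Rsrt D p f) \<longrightarrow>
            (\<forall>u g r. sym_rationalizes D p f u g r \<longrightarrow> u x > u y))"
  using chain[OF assms(1,2)] unfolding TP_def TC_def
  by (metis (no_types, lifting) case_prodD less_eq_real_def mem_Collect_eq)

end
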